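(* For every base $\mathcal{B}$, atomic multiset $L$ and ILL formulae $\varphi,\psi$: if $\varphi\Vdash^L_{\mathcal{B}}\psi$, then $!\varphi\Vdash^L_{\mathcal{B}}\psi$.
   Context: Fix a set $\mathbb{A}$ of propositional atoms. ILL formulae: $\phi ::= p\in\mathbb{A} \mid \top \mid 0 \mid 1 \mid \phi\multimap\phi \mid \phi\otimes\phi \mid \phi\,\&\,\phi \mid \phi\oplus\phi \mid\ !\phi$. All multisets are finite; "$\Gamma,\Delta$" denotes multiset union. Atomic rules and bases: an atomic sequent is $P\Rightarrow p$ with $P$ a multiset of atoms, $p$ an atom. An atomic box is a multiset of atomic sequents. An atomic rule is a triple $\langle\mathbf{A},\mathbf{S},p\rangle$ with $\mathbf{A}$ a multiset of atomic boxes, $\mathbf{S}$ an atomic box, $p$ an atom. A base is a set of atomic rules. An atom $p$ is persistent in $\mathcal{B}$ if some $\langle\varnothing,\mathbf{S},p\rangle\in\mathcal{B}$ has $\mathbf{S}\neq\varnothing$. Derivability $\vdash_{\mathcal{B}}$: (Ref) $p\vdash_{\mathcal{B}}p$; (App) if $\langle\mathbf{A},\mathbf{S},p\rangle\in\mathcal{B}$ with $\mathbf{A}=\{\mathbf{T}_1,\dots,\mathbf{T}_m\}$, and there are atomic multisets $C_1,\dots,C_n$ ($n\ge m$) and a multiset $D=\{d_{m+1},\dots,d_n\}$ of atoms persistent in $\mathcal{B}$ such that $C_i,Q\vdash_{\mathcal{B}}q$ for every $i\le m$ and every $Q\Rightarrow q\in\mathbf{T}_i$, $C_j\vdash_{\mathcal{B}}d_j$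 for every $m<j\le n$, and $D,U\vdash_{\mathcal{B}}v$ for every $U\Rightarrow v\in\mathbf{S}$, then $C_1,\dots,C_n\vdash_{\mathcal{B}}p$. Support $\Vdash^L_{\mathcal{B}}$ (base $\mathcal{B}$, atomic multiset $L$), by induction on formulae: $\Vdash^L_{\mathcal{B}}p$ iff $L\vdash_{\mathcal{B}}p$; $\Vdash^L_{\mathcal{B}}\varphi\multimap\psi$ iff $\varphi\Vdash^L_{\mathcal{B}}\psi$; $\Vdash^L_{\mathcal{B}}\varphi\otimes\psi$ iff for all $\mathcal{C}\supseteq\mathcal{B}$, atomic $K$, atoms $p$: if $\varphi,\psi\Vdash^K_{\mathcal{C}}p$ then $\Vdash^{L,K}_{\mathcal{C}}p$; $\Vdash^L_{\mathcal{B}}1$ iff for all $\mathcal{C}\supseteq\mathcal{B}$, $K$, $p$: if $\Vdash^K_{\mathcal{C}}p$ then $\Vdash^{L,K}_{\mathcal{C}}p$; $\Vdash^L_{\mathcal{B}}\varphi\&\psi$ iff $\Vdash^L_{\mathcal{B}}\varphi$ and $\Vdash^L_{\mathcal{B}}\psi$; $\Vdash^L_{\mathcal{B}}\varphi\oplus\psi$ iff for all $\mathcal{C}\supseteq\mathcal{B}$, $K$, $p$: if $\varphi\Vdash^K_{\mathcal{C}}p$ and $\psi\Vdash^K_{\mathcal{C}}p$ then $\Vdash^{L,K}_{\mathcal{C}}p$; $\Vdash^L_{\mathcal{B}}0$ iff $\Vdash^{L,K}_{\mathcal{B}}p$ for all atoms $p$ and atomic $K$; $\Vdash^L_{\mathcal{B}}\top$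 always; $\Vdash^L_{\mathcal{B}}!\varphi$ iff for all $\mathcal{C}\supseteq\mathcal{B}$, $K$, $p$: if (for all $\mathcal{D}\supseteq\mathcal{C}$, $\Vdash^{\varnothing}_{\mathcal{D}}\varphi$ implies $\Vdash^K_{\mathcal{D}}p$) then $\Vdash^{L,K}_{\mathcal{C}}p$. For nonempty multisets: $\Vdash^L_{\mathcal{B}}\Gamma,\Delta$ iff $L=K,M$ with $\Vdash^K_{\mathcal{B}}\Gamma$ and $\Vdash^M_{\mathcal{B}}\Delta$. For a nonempty antecedent written $!\Delta,\Theta$, where $!\Delta$ collects the formulae with top-level connective $!$ (with $\Delta$ the formulae under those $!$) and $\Theta$ contains none: $!\Delta,\Theta\Vdash^L_{\mathcal{B}}\varphi$ iff for all $\mathcal{C}\supseteq\mathcal{B}$ and atomic $K$, if $\Vdash^{\varnothing}_{\mathcal{C}}\delta$ for every $\delta\in\Delta$ and $\Vdash^K_{\mathcal{C}}\Theta$ then $\Vdash^{L,K}_{\mathcal{C}}\varphi$ (when $\Theta$ is empty, $K$ is empty). In particular $!\varphi\Vdash^L_{\mathcal{B}}\psi$ iff for all $\mathcal{C}\supseteq\mathcal{B}$, $\Vdash^{\varnothing}_{\mathcal{C}}\varphi$ implies $\Vdash^L_{\mathcal{C}}\psi$. An empty antecedent: $\varnothing\Vdash^L_{\mathcal{B}}\varphi$ means $\Vdash^L_{\mathcal{B}}\varphi$. *)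

theory Defs
  imports Main "HOL-Library.Multiset"
begin

datatype 'a form =
    At 'a | Top | Zero | One
  | Lolli "'a form" "'a form"
  | Tensor "'a form" "'a form"
  | With "'a form" "'a form"
  | Plus "'a form" "'a form"
  | Bang "'a form"

type_synonym 'a aseq = "'a multiset \<times> 'a"
type_synonym 'a abox = "'a aseq multiset"
type_synonym 'a arule = "'a abox multiset \<times> 'a abox \<times> 'a"
type_synonym 'a base = "'a arule set"

definition persistent :: "'a base \<Rightarrow> 'a \<Rightarrow> bool" where
  "persistent B p \<longleftrightarrow> (\<exists>S. ({#}, S, p) \<in> B \<and> S \<noteq> {#})"

text \<open>Derivability. In (App) the multiset A = {T_1,..,T_m} is enumerated by a list Ts,
  C_1..C_m by the list Cs, the persistent atoms d_{m+1}..d_n by the list ds and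
  C_{m+1}..C_n by the list Es.\<close>

inductive derives :: "'a base \<Rightarrow> 'a multiset \<Rightarrow> 'a \<Rightarrow> bool" for B where
  Ref: "derives B {#p#} p"
| App: "\<lbrakk> (A, S, p) \<in> B; mset Ts = A; length Cs = length Ts; length Es = length ds;
          \<forall>d \<in> set ds. persistent B d;
          \<forall>i < length Ts. \<forall>Q q. (Q, q) \<in># Ts ! i \<longrightarrow> derives B (Cs ! i + Q) q;
          \<forall>j < length ds. derives B (Es ! j) (ds ! j);
          \<forall>U v. (U, v) \<in># S \<longrightarrow> derives B (mset ds + U) v \<rbrakk>
        \<Longrightarrow> derives B (sum_list Cs + sum_list Es) p"

text \<open>Antecedents occurring inside clauses are unfolded following the paper's clause for
  antecedents !Delta,Theta: a formula Bang d in the antecedent contributes the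
  requirement  sup D {#} d  and no atomic resources, a non-banged formula chi
  contributes  sup D K chi  for its share K of the resources.\<close>

fun sup :: "'a base \<Rightarrow> 'a multiset \<Rightarrow> 'a form \<Rightarrow> bool" where
  "sup B L (At p) = derives B L p"
| "sup B L (Lolli \<phi> \<psi>) =
     (case \<phi> of
        Bang \<delta> \<Rightarrow> (\<forall>C. B \<subseteq> C \<longrightarrow> sup C {#} \<delta> \<longrightarrow> sup C L \<psi>)
      | _ \<Rightarrow> (\<forall>C K. B \<subseteq> C \<longrightarrow> sup C K \<phi> \<longrightarrow> sup C (L + K) \<psi>))"
| "sup B L (Tensor \<phi> \<psi>) =
     (\<forall>C K p. B \<subseteq> C \<longrightarrow>
        (\<forall>D K'. C \<subseteq> D \<longrightarrow>
           (\<exists>K1 K2. K' = K1 + K2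
              \<and> (case \<phi> of Bang \<delta> \<Rightarrow> K1 = {#} \<and> sup D {#} \<delta> | _ \<Rightarrow> sup D K1 \<phi>)
              \<and> (case \<psi> of Bang \<delta> \<Rightarrow> K2 = {#} \<and> sup D {#} \<delta> | _ \<Rightarrow> sup D K2 \<psi>))
           \<longrightarrow> derives D (K + K') p)
        \<longrightarrow> derives C (L + K) p)"
| "sup B L One = (\<forall>C K p. B \<subseteq> C \<longrightarrow> derives C K p \<longrightarrow> derives C (L + K) p)"
| "sup B L (With \<phi> \<psi>) = (sup B L \<phi> \<and> sup B L \<psi>)"
| "sup B L (Plus \<phi> \<psi>) =
     (\<forall>C K p. B \<subseteq> C \<longrightarrow>
        (case \<phi> of
           Bang \<delta> \<Rightarrow> (\<forall>D. C \<subseteq> D \<longrightarrow> sup D {#} \<delta> \<longrightarrow> derives D K p)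
         | _ \<Rightarrow> (\<forall>D K'. C \<subseteq> D \<longrightarrow> sup D K' \<phi> \<longrightarrow> derives D (K + K') p)) \<longrightarrow>
        (case \<psi> of
           Bang \<delta> \<Rightarrow> (\<forall>D. C \<subseteq> D \<longrightarrow> sup D {#} \<delta> \<longrightarrow> derives D K p)
         | _ \<Rightarrow> (\<forall>D K'. C \<subseteq> D \<longrightarrow> sup D K' \<psi> \<longrightarrow> derives D (K + K') p)) \<longrightarrow>
        derives C (L + K) p)"
| "sup B L Zero = (\<forall>p K. derives B (L + K) p)"
| "sup B L Top = True"
| "sup B L (Bang \<phi>) =
     (\<forall>C K p. B \<subseteq> C \<longrightarrow>
        (\<forall>D. C \<subseteq> D \<longrightarrow> sup D {#} \<phi> \<longrightarrow> derives D K p) \<longrightarrow>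
        derives C (L + K) p)"

definition supm :: "'a base \<Rightarrow> 'a multiset \<Rightarrow> 'a form multiset \<Rightarrow> bool" where
  "supm B L \<Gamma> \<longleftrightarrow> (\<exists>fs Ls. mset fs = \<Gamma> \<and> length Ls = length fs \<and> L = sum_list Ls
                          \<and> (\<forall>i < length fs. sup B (Ls ! i) (fs ! i)))"

fun is_bang :: "'a form \<Rightarrow> bool" where
  "is_bang (Bang _) = True"
| "is_bang _ = False"

fun unbang :: "'a form \<Rightarrow> 'a form" where
  "unbang (Bang \<phi>) = \<phi>"
| "unbang \<phi> = \<phi>"

definition cons :: "'a base \<Rightarrow> 'a multiset \<Rightarrow> 'a form multiset \<Rightarrow> 'a form \<Rightarrow> bool" where
  "cons B L \<Gamma> \<phi> \<longleftrightarrow>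
     (if \<Gamma> = {#} then sup B L \<phi>
      else (\<forall>C K. B \<subseteq> C \<longrightarrow>
              (\<forall>\<delta> \<in># image_mset unbang (filter_mset is_bang \<Gamma>). sup C {#} \<delta>) \<longrightarrow>
              supm C K (filter_mset (\<lambda>\<chi>. \<not> is_bang \<chi>) \<Gamma>) \<longrightarrow>
              sup C (L + K) \<phi>))"

end

theory Submission
  imports Defs
begin

lemma persistent_mono: "persistent B d \<Longrightarrow> B \<subseteq> C \<Longrightarrow> persistent C d"
  unfolding persistent_def by blast

lemma derives_mono: "derives B L p \<Longrightarrow> B \<subseteq> C \<Longrightarrow> derives C L p"
proof (induction rule: derives.induct)
  case (Ref p)
  show ?case by (rule derives.Ref)
next
  case (App A S p Ts Cs Es ds)
  note h = App
  show ?case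
  proof (rule derives.App[of A S p C Ts Cs Es ds])
    show "(A, S, p) \<in> C" using h(1) h(9) by blast
    show "mset Ts = A" by (rule h(2))
    show "length Cs = length Ts" by (rule h(3))
    show "length Es = length ds" by (rule h(4))
    show "\<forall>d\<in>set ds. persistent C d"
    proof
      fix d assume "d \<in> set ds"
      then have "persistent B d" using h(5) by (rule bspec[rotated])
      then show "persistent C d" using h(9) by (rule persistent_mono)
    qed
    show "\<forall>i<length Ts. \<forall>Q q. (Q, q) \<in># Ts ! i \<longrightarrow> derives C (Cs ! i + Q) q"
    proof (intro allI impI)
      fix i Q q assume "i < length Ts" "(Q, q) \<in># Ts ! i"
      then have "derives B (Cs ! i + Q) q \<and> (B \<subseteq> C \<longrightarrow> derives C (Cs ! i + Q) q)"
        using h(6) by simp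
      then show "derives C (Cs ! i + Q) q" using h(9) by simp
    qed
    show "\<forall>j<length ds. derives C (Es ! j) (ds ! j)"
    proof (intro allI impI)
      fix j assume "j < length ds"
      then have "derives B (Es ! j) (ds ! j) \<and> (B \<subseteq> C \<longrightarrow> derives C (Es ! j) (ds ! j))"
        using h(7) by simp
      then show "derives C (Es ! j) (ds ! j)" using h(9) by simp
    qed
    show "\<forall>U v. (U, v) \<in># S \<longrightarrow> derives C (mset ds + U) v"
    proof (intro allI impI)
      fix U v assume "(U, v) \<in># S"
      then have "derives B (mset ds + U) v \<and> (B \<subseteq> C \<longrightarrow> derives C (mset ds + U) v)"
        using h(8) by simp
      then show "derives C (mset ds + U) v" using h(9) by simp
    qed
  qed
qed

lemma mono3: "(\<forall>C K p. B \<subseteq> C \<longrightarrow> P C K p) \<Longrightarrow> B \<subseteq> B' \<Longrightarrow> (\<forall>C K p. B' \<subseteq> C \<longrightarrow> P C K p)"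
  by blast

lemma lolli_eq: "sup B L (Lolli \<chi>1 \<chi>2) = (if is_bang \<chi>1 then (\<forall>C. B \<subseteq> C \<longrightarrow> sup C {#} (unbang \<chi>1) \<longrightarrow> sup C L \<chi>2)
   else (\<forall>C K. B \<subseteq> C \<longrightarrow> sup C K \<chi>1 \<longrightarrow> sup C (L + K) \<chi>2))"
  by (cases \<chi>1) (simp only: sup.simps(2) form.simps is_bang.simps unbang.simps if_True if_False)+

lemma mono1: "(\<forall>C. B \<subseteq> C \<longrightarrow> P C) \<Longrightarrow> B \<subseteq> B' \<Longrightarrow> (\<forall>C. B' \<subseteq> C \<longrightarrow> P C)"
  by blast

lemma mono2: "(\<forall>C K. B \<subseteq> C \<longrightarrow> P C K) \<Longrightarrow> B \<subseteq> B' \<Longrightarrow> (\<forall>C K. B' \<subseteq> C \<longrightarrow> P C K)"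
  by blast

lemma sup_mono: "sup B L \<chi> \<Longrightarrow> B \<subseteq> C \<Longrightarrow> sup C L \<chi>"
proof (induction \<chi> arbitrary: B L C)
  case (At x)
  then show ?case using derives_mono by auto
next
  case (Lolli \<chi>1 \<chi>2)
  show ?case
  proof (cases "is_bang \<chi>1")
    case True
    then show ?thesis using Lolli.prems unfolding lolli_eq by (simp only: if_True) (rule mono1)
  next
    case False
    then show ?thesis using Lolli.prems unfolding lolli_eq by (simp only: if_False) (rule mono2)
  qed
next
  case (Tensor \<chi>1 \<chi>2)
  show ?case using Tensor.prems unfolding sup.simps(3) by (rule mono3)
next
  case (Plus \<chi>1 \<chi>2)
  show ?case using Plus.prems unfolding sup.simps(6) by (rule mono3)
next
  case (Bang \<chi>)
  show ?case using Bang.prems unfolding sup.simps(9) by (rule mono3)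
next
  case One
  show ?case using One.prems unfolding sup.simps(4) by (rule mono3)
qed (auto intro: derives_mono)

lemma caseX: "(case \<chi> of Bang d \<Rightarrow> f d | _ \<Rightarrow> g) = (if is_bang \<chi> then f (unbang \<chi>) else g)"
  by (cases \<chi>) auto

lemma bang_use: "sup C {#} (Bang \<delta>) \<Longrightarrow> C \<subseteq> C' \<Longrightarrow> (\<forall>D. C' \<subseteq> D \<longrightarrow> sup D {#} \<delta> \<longrightarrow> derives D K p) \<Longrightarrow> derives C' K p"
  by simp

lemma tens_aux: "(\<forall>C K p. D \<subseteq> C \<longrightarrow> (\<forall>D' K'. C \<subseteq> D' \<longrightarrow> X D' K' \<longrightarrow> derives D' (K + K') p) \<longrightarrow> derives C (M + K) p)
  \<Longrightarrow> (\<forall>D' K'. C' \<subseteq> D' \<longrightarrow> X D' K' \<longrightarrow> derives D' (K + K') p) \<Longrightarrow> C' \<subseteq> D \<Longrightarrow> derives D (M + K) p"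
proof -
  assume a: "\<forall>C K p. D \<subseteq> C \<longrightarrow> (\<forall>D' K'. C \<subseteq> D' \<longrightarrow> X D' K' \<longrightarrow> derives D' (K + K') p) \<longrightarrow> derives C (M + K) p"
    and b: "\<forall>D' K'. C' \<subseteq> D' \<longrightarrow> X D' K' \<longrightarrow> derives D' (K + K') p" and c: "C' \<subseteq> D"
  have "\<forall>D' K'. D \<subseteq> D' \<longrightarrow> X D' K' \<longrightarrow> derives D' (K + K') p" using b c by blast
  then show ?thesis using a by blast
qed

lemma bangc_aux: "(\<forall>C K p. D \<subseteq> C \<longrightarrow> (\<forall>D'. C \<subseteq> D' \<longrightarrow> X D' \<longrightarrow> derives D' K p) \<longrightarrow> derives C (M + K) p)
  \<Longrightarrow> (\<forall>D'. C' \<subseteq> D' \<longrightarrow> X D' \<longrightarrow> derives D' K p) \<Longrightarrow> C' \<subseteq> D \<Longrightarrow> derives D (M + K) p"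
proof -
  assume a: "\<forall>C K p. D \<subseteq> C \<longrightarrow> (\<forall>D'. C \<subseteq> D' \<longrightarrow> X D' \<longrightarrow> derives D' K p) \<longrightarrow> derives C (M + K) p"
    and b: "\<forall>D'. C' \<subseteq> D' \<longrightarrow> X D' \<longrightarrow> derives D' K p" and c: "C' \<subseteq> D"
  have "\<forall>D'. D \<subseteq> D' \<longrightarrow> X D' \<longrightarrow> derives D' K p" using b c by blast
  then show ?thesis using a by blast
qed

lemma ifmono: "(if b then (\<forall>D'. C' \<subseteq> D' \<longrightarrow> A D') else (\<forall>D' K'. C' \<subseteq> D' \<longrightarrow> Bf D' K'))
  \<Longrightarrow> C' \<subseteq> D \<Longrightarrow> (if b then (\<forall>D'. D \<subseteq> D' \<longrightarrow> A D') else (\<forall>D' K'. D \<subseteq> D' \<longrightarrow> Bf D' K'))"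
  by (cases b) auto

lemma plus_aux2: "(\<forall>C K p. D \<subseteq> C \<longrightarrow>
     (if b1 then (\<forall>D'. C \<subseteq> D' \<longrightarrow> A1 D' K p) else (\<forall>D' K'. C \<subseteq> D' \<longrightarrow> B1 D' K' K p)) \<longrightarrow>
     (if b2 then (\<forall>D'. C \<subseteq> D' \<longrightarrow> A2 D' K p) else (\<forall>D' K'. C \<subseteq> D' \<longrightarrow> B2 D' K' K p)) \<longrightarrow>
     derives C (M + K) p)
  \<Longrightarrow> (if b1 then (\<forall>D'. C' \<subseteq> D' \<longrightarrow> A1 D' K p) else (\<forall>D' K'. C' \<subseteq> D' \<longrightarrow> B1 D' K' K p))
  \<Longrightarrow> (if b2 then (\<forall>D'. C' \<subseteq> D' \<longrightarrow> A2 D' K p) else (\<forall>D' K'. C' \<subseteq> D' \<longrightarrow> B2 D' K' K p))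
  \<Longrightarrow> C' \<subseteq> D \<Longrightarrow> derives D (M + K) p"
proof -
  assume a: "\<forall>C K p. D \<subseteq> C \<longrightarrow>
     (if b1 then (\<forall>D'. C \<subseteq> D' \<longrightarrow> A1 D' K p) else (\<forall>D' K'. C \<subseteq> D' \<longrightarrow> B1 D' K' K p)) \<longrightarrow>
     (if b2 then (\<forall>D'. C \<subseteq> D' \<longrightarrow> A2 D' K p) else (\<forall>D' K'. C \<subseteq> D' \<longrightarrow> B2 D' K' K p)) \<longrightarrow>
     derives C (M + K) p"
    and b: "if b1 then (\<forall>D'. C' \<subseteq> D' \<longrightarrow> A1 D' K p) else (\<forall>D' K'. C' \<subseteq> D' \<longrightarrow> B1 D' K' K p)"
    and c: "if b2 then (\<forall>D'. C' \<subseteq> D' \<longrightarrow> A2 D' K p) else (\<forall>D' K'. C' \<subseteq> D' \<longrightarrow> B2 D' K' K p)"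
    and d: "C' \<subseteq> D"
  show ?thesis by (rule a[rule_format, OF order_refl ifmono[OF b d] ifmono[OF c d]])
qed

lemma bang_elim:
  assumes H: "sup C {#} (Bang \<delta>)"
    and X: "\<forall>D. C \<subseteq> D \<longrightarrow> sup D {#} \<delta> \<longrightarrow> sup D M \<chi>"
  shows "sup C M \<chi>"
  using H X
proof (induction \<chi> arbitrary: C M)
  case (At x)
  then show ?case using bang_use[OF At.prems(1) order_refl] by simp
next
  case Top
  then show ?case by simp
next
  case Zero
  show ?case
  proof (simp only: sup.simps(7), intro allI)
    fix p K
    have "\<forall>D. C \<subseteq> D \<longrightarrow> sup D {#} \<delta> \<longrightarrow> derives D (M + K) p"
      using Zero.prems(2) by simp
    then show "derives C (M + K) p" using bang_use[OF Zero.prems(1) order_refl] by blast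
  qed
next
  case One
  show ?case
  proof (simp only: sup.simps(4), intro allI impI)
    fix C' K p assume c: "C \<subseteq> C'" and d: "derives C' K p"
    have "\<forall>D. C' \<subseteq> D \<longrightarrow> sup D {#} \<delta> \<longrightarrow> derives D (M + K) p"
    proof (intro allI impI)
      fix D assume d': "C' \<subseteq> D" and sd: "sup D {#} \<delta>"
      have "sup D M One" using One.prems(2) c d' sd order_trans by blast
      moreover have "derives D K p" using derives_mono[OF d d'] .
      ultimately show "derives D (M + K) p" by (simp only: sup.simps(4))
    qed
    then show "derives C' (M + K) p" using bang_use[OF One.prems(1) c] by blast
  qed
next
  case (With \<chi>1 \<chi>2)
  then show ?case by auto
next
  case (Lolli \<chi>1 \<chi>2)
  show ?case
  proof (cases "is_bang \<chi>1")
    case True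
    then obtain \<delta>1 where Bang: "\<chi>1 = Bang \<delta>1" by (cases \<chi>1) auto
    show ?thesis
    proof (simp only: lolli_eq True if_True Bang unbang.simps is_bang.simps, intro allI impI)
      fix C' assume c: "C \<subseteq> C'" and s: "sup C' {#} \<delta>1"
      have h: "sup C' {#} (Bang \<delta>)" using sup_mono[OF Lolli.prems(1) c] .
      have "\<forall>D. C' \<subseteq> D \<longrightarrow> sup D {#} \<delta> \<longrightarrow> sup D M \<chi>2"
      proof (intro allI impI)
        fix D assume d: "C' \<subseteq> D" and sd: "sup D {#} \<delta>"
        have "sup D M (Lolli \<chi>1 \<chi>2)" using Lolli.prems(2) c d sd order_trans by blast
        then have "\<forall>C. D \<subseteq> C \<longrightarrow> sup C {#} \<delta>1 \<longrightarrow> sup C M \<chi>2"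
          using True Bang by (simp only: lolli_eq if_True unbang.simps is_bang.simps)
        then show "sup D M \<chi>2" using sup_mono[OF s d] by blast
      qed
      then show "sup C' M \<chi>2" using Lolli.IH(2)[OF h] by blast
    qed
  next
    case False
    then have nb: "\<not> (\<exists>\<delta>1. \<chi>1 = Bang \<delta>1)" by auto
    have eq: "\<And>B L. sup B L (Lolli \<chi>1 \<chi>2) = (\<forall>C K. B \<subseteq> C \<longrightarrow> sup C K \<chi>1 \<longrightarrow> sup C (L + K) \<chi>2)"
      using False by (simp only: lolli_eq if_False)
    show ?thesis
    proof (simp only: eq, intro allI impI)
      fix C' K assume c: "C \<subseteq> C'" and s: "sup C' K \<chi>1"
      have h: "sup C' {#} (Bang \<delta>)" using sup_mono[OF Lolli.prems(1) c] .
      have "\<forall>D. C' \<subseteq> D \<longrightarrow> sup D {#} \<delta> \<longrightarrow> sup D (M + K) \<chi>2"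
      proof (intro allI impI)
        fix D assume d: "C' \<subseteq> D" and sd: "sup D {#} \<delta>"
        have "sup D M (Lolli \<chi>1 \<chi>2)" using Lolli.prems(2) c d sd order_trans by blast
        then have "\<forall>C K. D \<subseteq> C \<longrightarrow> sup C K \<chi>1 \<longrightarrow> sup C (M + K) \<chi>2" by (simp only: eq)
        then show "sup D (M + K) \<chi>2" using sup_mono[OF s d] by blast
      qed
      then show "sup C' (M + K) \<chi>2" using Lolli.IH(2)[OF h] by blast
    qed
  qed
next
  case (Tensor \<chi>1 \<chi>2)
  show ?case
    apply (subst sup.simps(3))
    apply (intro allI impI)
    subgoal premises prems for C' K p
    proof -
      have "\<forall>D. C' \<subseteq> D \<longrightarrow> sup D {#} \<delta> \<longrightarrow> derives D (M + K) p"
      proof (intro allI impI)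
        fix D assume d: "C' \<subseteq> D" and sd: "sup D {#} \<delta>"
        have HT: "sup D M (Tensor \<chi>1 \<chi>2)" using Tensor.prems(2) prems(1) d sd order_trans by blast
        show "derives D (M + K) p"
          by (rule tens_aux[OF HT[unfolded sup.simps(3)] prems(2) d])
      qed
      then show ?thesis using bang_use[OF Tensor.prems(1) prems(1)] by blast
    qed
    done
next
  case (Plus \<chi>1 \<chi>2)
  show ?case
    apply (subst sup.simps(6))
    apply (simp only: caseX)
    apply (intro allI impI)
    subgoal premises prems for C' K p
    proof -
      have "\<forall>D. C' \<subseteq> D \<longrightarrow> sup D {#} \<delta> \<longrightarrow> derives D (M + K) p"
      proof (intro allI impI)
        fix D assume d: "C' \<subseteq> D" and sd: "sup D {#} \<delta>"
        have HT: "sup D M (Plus \<chi>1 \<chi>2)" using Plus.prems(2) prems(1) d sd order_trans by blast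
        show "derives D (M + K) p"
          by (rule plus_aux2[OF HT[unfolded sup.simps(6) caseX] prems(2) prems(3) d])
      qed
      then show ?thesis using bang_use[OF Plus.prems(1) prems(1)] by blast
    qed
    done
next
  case (Bang \<chi>1)
  show ?case
    apply (subst sup.simps(9))
    apply (intro allI impI)
    subgoal premises prems for C' K p
    proof -
      have "\<forall>D. C' \<subseteq> D \<longrightarrow> sup D {#} \<delta> \<longrightarrow> derives D (M + K) p"
      proof (intro allI impI)
        fix D assume d: "C' \<subseteq> D" and sd: "sup D {#} \<delta>"
        have HT: "sup D M (Bang \<chi>1)" using Bang.prems(2) prems(1) d sd order_trans by blast
        show "derives D (M + K) p"
          by (rule bangc_aux[OF HT[unfolded sup.simps(9)] prems(2) d])
      qed
      then show ?thesis using bang_use[OF Bang.prems(1) prems(1)] by blast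
    qed
    done
qed

lemma supm_empty: "supm C K {#} \<longleftrightarrow> K = {#}"
  unfolding supm_def by auto

lemma cons_single_bang: "cons B L {#Bang \<delta>#} \<psi> = (\<forall>C. B \<subseteq> C \<longrightarrow> sup C {#} \<delta> \<longrightarrow> sup C L \<psi>)"
  unfolding cons_def by (simp add: supm_empty)

lemma cons_single_nonbang: "\<not> is_bang \<phi> \<Longrightarrow>
   cons B L {#\<phi>#} \<psi> = (\<forall>C K. B \<subseteq> C \<longrightarrow> supm C K {#\<phi>#} \<longrightarrow> sup C (L + K) \<psi>)"
  unfolding cons_def by simp

lemma supm_single: "supm C K {#\<phi>#} = sup C K \<phi>"
  unfolding supm_def
proof
  assume "\<exists>fs Ls. mset fs = {#\<phi>#} \<and> length Ls = length fs \<and> K = sum_list Ls \<and> (\<forall>i<length fs. sup C (Ls ! i) (fs ! i))"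
  then obtain fs Ls where a: "mset fs = {#\<phi>#}" "length Ls = length fs" "K = sum_list Ls"
     "\<forall>i<length fs. sup C (Ls ! i) (fs ! i)" by blast
  from a(1) have "fs = [\<phi>]" by (cases fs) auto
  moreover from a(2) this obtain L0 where "Ls = [L0]" by (cases Ls) auto
  ultimately show "sup C K \<phi>" using a(3,4) by auto
next
  assume "sup C K \<phi>"
  then show "\<exists>fs Ls. mset fs = {#\<phi>#} \<and> length Ls = length fs \<and> K = sum_list Ls \<and> (\<forall>i<length fs. sup C (Ls ! i) (fs ! i))"
    by (intro exI[of _ "[\<phi>]"] exI[of _ "[K]"]) auto
qed

theorem lemma8:
  fixes B :: "'a base" and L :: "'a multiset" and \<phi> \<psi> :: "'a form"
  assumes "cons B L {#\<phi>#} \<psi>"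
  shows "cons B L {#Bang \<phi>#} \<psi>"
proof (cases "is_bang \<phi>")
  case True
  then obtain \<delta> where p: "\<phi> = Bang \<delta>" by (cases \<phi>) auto
  have A: "\<forall>C. B \<subseteq> C \<longrightarrow> sup C {#} \<delta> \<longrightarrow> sup C L \<psi>"
    using assms unfolding p cons_single_bang .
  have "sup C L \<psi>" if c: "B \<subseteq> C" and h: "sup C {#} (Bang \<delta>)" for C
  proof -
    have "sup C {#} \<delta>" by (rule bang_elim[OF h]) simp
    then show "sup C L \<psi>" using A c by blast
  qed
  then show ?thesis unfolding p cons_single_bang by blast
next
  case False
  have A0: "\<forall>C K. B \<subseteq> C \<longrightarrow> sup C K \<phi> \<longrightarrow> sup C (L + K) \<psi>"
    using assms unfolding cons_single_nonbang[OF False] supm_single .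
  have "\<forall>C. B \<subseteq> C \<longrightarrow> sup C {#} \<phi> \<longrightarrow> sup C L \<psi>"
  proof (intro allI impI)
    fix C assume "B \<subseteq> C" "sup C {#} \<phi>"
    then have "sup C (L + {#}) \<psi>" using A0 by blast
    then show "sup C L \<psi>" by simp
  qed
  then show ?thesis unfolding cons_single_bang .
qed

end
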